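(* Let $G=(A\cup B,E)$ be a bipartite graph that has a grounded L-representation which is nice with respect to the bipartition $(A,B)$. Then $G$ is a stick graph.
   Context: An L-shape is the union of a vertical segment and a horizontal segment such that the bottom end-point of the vertical segment coincides with the left end-point of the horizontal segment; the top end-point of the vertical segment is its anchor. A grounded L-representation of a graph assigns an L-shape to each vertex, all anchors lying on a common horizontal line, so that two vertices are adjacent iff their L-shapes intersect. For a bipartite graph $G=(A\cup B,E)$, such a representation is nice if every L-shape representing a vertex of $A$ meets other L-shapes only on its horizontal segment, and every L-shape representing a vertex of $B$ meets other L-shapes only on its vertical segment. A stick graph is a bipartite graph that is the intersection graph of a set of vertical segments (one part) and a set of horizontal segments (the other part) such that the bottom end-points of the vertical segments and the left end-points of the horizontal segments all lie on a common straight line of slope $-1$. *)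

theory Defs
  imports Main "HOL.Real"
begin

definition bipartite_graph :: "'v set \<Rightarrow> 'v set \<Rightarrow> ('v \<Rightarrow> 'v \<Rightarrow> bool) \<Rightarrow> bool" where
  "bipartite_graph A B E \<longleftrightarrow> finite A \<and> finite B \<and> A \<inter> B = {} \<and>
     (\<forall>u v. E u v \<longrightarrow> E v u) \<and>
     (\<forall>u v. E u v \<longrightarrow> (u \<in> A \<and> v \<in> B) \<or> (u \<in> B \<and> v \<in> A))"

definition vseg :: "real \<Rightarrow> real \<Rightarrow> real \<Rightarrow> (real \<times> real) set" where
  "vseg x y1 y2 = {(x, y) | y. y1 \<le> y \<and> y \<le> y2}"

definition hseg :: "real \<Rightarrow> real \<Rightarrow> real \<Rightarrow> (real \<times> real) set" where
  "hseg y x1 x2 = {(x, y) | x. x1 \<le> x \<and> x \<le> x2}"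

definition L_vert :: "real \<Rightarrow> real \<Rightarrow> real \<Rightarrow> (real \<times> real) set" where
  "L_vert c ax h = vseg ax (c - h) c"

definition L_horiz :: "real \<Rightarrow> real \<Rightarrow> real \<Rightarrow> real \<Rightarrow> (real \<times> real) set" where
  "L_horiz c ax h w = hseg (c - h) ax (ax + w)"

definition L_shape :: "real \<Rightarrow> real \<Rightarrow> real \<Rightarrow> real \<Rightarrow> (real \<times> real) set" where
  "L_shape c ax h w = L_vert c ax h \<union> L_horiz c ax h w"

definition grounded_L_rep ::
  "'v set \<Rightarrow> ('v \<Rightarrow> 'v \<Rightarrow> bool) \<Rightarrow> real \<Rightarrow> ('v \<Rightarrow> real) \<Rightarrow> ('v \<Rightarrow> real) \<Rightarrow> ('v \<Rightarrow> real) \<Rightarrow> bool" where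
  "grounded_L_rep V E c ax h w \<longleftrightarrow>
     (\<forall>v\<in>V. h v > 0 \<and> w v > 0) \<and>
     (\<forall>u\<in>V. \<forall>v\<in>V. u \<noteq> v \<longrightarrow>
        (E u v \<longleftrightarrow> L_shape c (ax u) (h u) (w u) \<inter> L_shape c (ax v) (h v) (w v) \<noteq> {}))"

definition nice_grounded_L_rep ::
  "'v set \<Rightarrow> 'v set \<Rightarrow> ('v \<Rightarrow> 'v \<Rightarrow> bool) \<Rightarrow> real \<Rightarrow> ('v \<Rightarrow> real) \<Rightarrow> ('v \<Rightarrow> real) \<Rightarrow> ('v \<Rightarrow> real) \<Rightarrow> bool" where
  "nice_grounded_L_rep A B E c ax h w \<longleftrightarrow>
     grounded_L_rep (A \<union> B) E c ax h w \<and>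
     (\<forall>a\<in>A. \<forall>v\<in>A \<union> B. v \<noteq> a \<longrightarrow>
        L_shape c (ax a) (h a) (w a) \<inter> L_shape c (ax v) (h v) (w v) \<subseteq> L_horiz c (ax a) (h a) (w a)) \<and>
     (\<forall>b\<in>B. \<forall>v\<in>A \<union> B. v \<noteq> b \<longrightarrow>
        L_shape c (ax b) (h b) (w b) \<inter> L_shape c (ax v) (h v) (w v) \<subseteq> L_vert c (ax b) (h b))"

definition has_nice_grounded_L_rep :: "'v set \<Rightarrow> 'v set \<Rightarrow> ('v \<Rightarrow> 'v \<Rightarrow> bool) \<Rightarrow> bool" where
  "has_nice_grounded_L_rep A B E \<longleftrightarrow> (\<exists>c ax h w. nice_grounded_L_rep A B E c ax h w)"

text \<open>Stick representation with vertical segments for P and horizontal segments for Q,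
  ground line y = d - x (slope -1): the vertical segment of v \<in> P has bottom end-point
  (p, d - p) and the horizontal segment of v \<in> Q has left end-point (p, d - p).\<close>
definition stick_rep :: "'v set \<Rightarrow> 'v set \<Rightarrow> ('v \<Rightarrow> 'v \<Rightarrow> bool) \<Rightarrow> bool" where
  "stick_rep P Q E \<longleftrightarrow>
     (\<exists>d::real. \<exists>S :: 'v \<Rightarrow> (real \<times> real) set.
        (\<forall>v\<in>P. \<exists>p l. l > 0 \<and> S v = vseg p (d - p) (d - p + l)) \<and>
        (\<forall>v\<in>Q. \<exists>p l. l > 0 \<and> S v = hseg (d - p) p (p + l)) \<and>
        (\<forall>u\<in>P \<union> Q. \<forall>v\<in>P \<union> Q. u \<noteq> v \<longrightarrow> (E u v \<longleftrightarrow> S u \<inter> S v \<noteq> {})))"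

definition stick_graph :: "'v set \<Rightarrow> 'v set \<Rightarrow> ('v \<Rightarrow> 'v \<Rightarrow> bool) \<Rightarrow> bool" where
  "stick_graph A B E \<longleftrightarrow> bipartite_graph A B E \<and> (stick_rep A B E \<or> stick_rep B A E)"

end

theory Submission
  imports Defs
begin

lemma mem_vseg[simp]: "((x,y) \<in> vseg X y1 y2) \<longleftrightarrow> x = X \<and> y1 \<le> y \<and> y \<le> y2"
  by (auto simp: vseg_def)

lemma mem_hseg[simp]: "((x,y) \<in> hseg Y x1 x2) \<longleftrightarrow> y = Y \<and> x1 \<le> x \<and> x \<le> x2"
  by (auto simp: hseg_def)

lemma mem_L[simp]:
  "((x,y) \<in> L_shape c a hh ww) \<longleftrightarrow> (x = a \<and> c - hh \<le> y \<and> y \<le> c) \<or> (y = c - hh \<and> a \<le> x \<and> x \<le> a + ww)"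
  by (simp add: L_shape_def L_vert_def L_horiz_def)

lemma stick_inter:
  "(hseg (d - p) p (p + l) \<inter> vseg q (d - q) (d - q + m) \<noteq> {}) \<longleftrightarrow> p \<le> q \<and> q \<le> p + l \<and> q - p \<le> m"
proof
  assume "hseg (d - p) p (p + l) \<inter> vseg q (d - q) (d - q + m) \<noteq> {}"
  then obtain x y where "(x,y) \<in> hseg (d - p) p (p + l)" "(x,y) \<in> vseg q (d - q) (d - q + m)" by auto
  then show "p \<le> q \<and> q \<le> p + l \<and> q - p \<le> m" by auto
next
  assume "p \<le> q \<and> q \<le> p + l \<and> q - p \<le> m"
  then have "(q, d - p) \<in> hseg (d - p) p (p + l) \<inter> vseg q (d - q) (d - q + m)" by auto
  then show "hseg (d - p) p (p + l) \<inter> vseg q (d - q) (d - q + m) \<noteq> {}" by blast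
qed

lemma hseg_disj: "p \<noteq> p' \<Longrightarrow> hseg (d - p) p (p + l) \<inter> hseg (d - p') p' (p' + l') = {}"
  by (auto simp: hseg_def)

lemma vseg_disj: "q \<noteq> q' \<Longrightarrow> vseg q y1 y2 \<inter> vseg q' y1' y2' = {}"
  by (auto simp: vseg_def)

theorem proposition2:
  fixes A B :: "'v set" and E :: "'v \<Rightarrow> 'v \<Rightarrow> bool"
  assumes "bipartite_graph A B E"
    and "has_nice_grounded_L_rep A B E"
  shows "stick_graph A B E"
proof -
  have finA: "finite A" and finB: "finite B" and disj: "A \<inter> B = {}"
    and symE: "\<And>u v. E u v \<Longrightarrow> E v u"
    and bip: "\<And>u v. E u v \<Longrightarrow> (u \<in> A \<and> v \<in> B) \<or> (u \<in> B \<and> v \<in> A)"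
    using assms(1) unfolding bipartite_graph_def by blast+
  obtain c ax h w where N: "nice_grounded_L_rep A B E c ax h w"
    using assms(2) unfolding has_nice_grounded_L_rep_def by blast
  have pos: "\<And>v. v \<in> A \<union> B \<Longrightarrow> h v > 0 \<and> w v > 0"
    using N unfolding nice_grounded_L_rep_def grounded_L_rep_def by blast
  have rep: "\<And>u v. u \<in> A \<union> B \<Longrightarrow> v \<in> A \<union> B \<Longrightarrow> u \<noteq> v \<Longrightarrow>
        E u v \<longleftrightarrow> L_shape c (ax u) (h u) (w u) \<inter> L_shape c (ax v) (h v) (w v) \<noteq> {}"
    using N unfolding nice_grounded_L_rep_def grounded_L_rep_def by blast
  have niceA: "\<And>a v. a \<in> A \<Longrightarrow> v \<in> A \<union> B \<Longrightarrow> v \<noteq> a \<Longrightarrow>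
        L_shape c (ax a) (h a) (w a) \<inter> L_shape c (ax v) (h v) (w v) \<subseteq> L_horiz c (ax a) (h a) (w a)"
    using N unfolding nice_grounded_L_rep_def by blast
  have niceB: "\<And>b v. b \<in> B \<Longrightarrow> v \<in> A \<union> B \<Longrightarrow> v \<noteq> b \<Longrightarrow>
        L_shape c (ax b) (h b) (w b) \<inter> L_shape c (ax v) (h v) (w v) \<subseteq> L_vert c (ax b) (h b)"
    using N unfolding nice_grounded_L_rep_def by blast
  have noAA: "\<not> E a a'" if "a \<in> A" "a' \<in> A" for a a'
    using bip[of a a'] that disj by blast
  have noBB: "\<not> E b b'" if "b \<in> B" "b' \<in> B" for b b'
    using bip[of b b'] that disj by blast
  have neqAB: "a \<noteq> b" if "a \<in> A" "b \<in> B" for a b using that disj by blast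
  have F1: "E a b \<longleftrightarrow> ax a \<le> ax b \<and> ax b \<le> ax a + w a \<and> h a \<le> h b"
    if a: "a \<in> A" and b: "b \<in> B" for a b
  proof
    assume "E a b"
    then have "L_shape c (ax a) (h a) (w a) \<inter> L_shape c (ax b) (h b) (w b) \<noteq> {}"
      using rep[of a b] a b neqAB by blast
    then obtain p where "p \<in> L_shape c (ax a) (h a) (w a) \<inter> L_shape c (ax b) (h b) (w b)"
      by blast
    then obtain x y where xy: "(x,y) \<in> L_shape c (ax a) (h a) (w a) \<inter> L_shape c (ax b) (h b) (w b)"
      by (cases p) blast
    have "(x,y) \<in> L_horiz c (ax a) (h a) (w a)" using niceA[of a b] xy a b neqAB[OF a b] by blast
    moreover have "(x,y) \<in> L_vert c (ax b) (h b)" using niceB[of b a] xy a b neqAB[OF a b] by blast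
    ultimately show "ax a \<le> ax b \<and> ax b \<le> ax a + w a \<and> h a \<le> h b"
      by (auto simp: L_horiz_def L_vert_def)
  next
    assume H: "ax a \<le> ax b \<and> ax b \<le> ax a + w a \<and> h a \<le> h b"
    have "(ax b, c - h a) \<in> L_shape c (ax a) (h a) (w a) \<inter> L_shape c (ax b) (h b) (w b)"
      using H pos[of a] a by auto
    then show "E a b" using rep[of a b] a b neqAB[OF a b] by blast
  qed
  have F2: "ax a \<noteq> ax b" if a: "a \<in> A" and b: "b \<in> B" for a b
  proof
    assume eq: "ax a = ax b"
    have "(ax a, c) \<in> L_shape c (ax a) (h a) (w a) \<inter> L_shape c (ax b) (h b) (w b)"
      using eq pos[of a] pos[of b] a b by auto
    then have "(ax a, c) \<in> L_horiz c (ax a) (h a) (w a)" using niceA[of a b] a b neqAB[OF a b] by blast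
    then show False using pos[of a] a by (auto simp: L_horiz_def)
  qed
  have F3: "ax a \<noteq> ax a'" if a: "a \<in> A" and a': "a' \<in> A" and ne: "a \<noteq> a'" for a a'
  proof
    assume eq: "ax a = ax a'"
    have "(ax a, c) \<in> L_shape c (ax a) (h a) (w a) \<inter> L_shape c (ax a') (h a') (w a')"
      using eq pos[of a] pos[of a'] a a' by auto
    then show False using rep[of a a'] a a' ne noAA[OF a a'] by blast
  qed
  have F4: "ax b \<noteq> ax b'" if b: "b \<in> B" and b': "b' \<in> B" and ne: "b \<noteq> b'" for b b'
  proof
    assume eq: "ax b = ax b'"
    have "(ax b, c) \<in> L_shape c (ax b) (h b) (w b) \<inter> L_shape c (ax b') (h b') (w b')"
      using eq pos[of b] pos[of b'] b b' by auto
    then show False using rep[of b b'] b b' ne noBB[OF b b'] by blast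
  qed
  have F5: "h a < h a'" if a: "a \<in> A" and a': "a' \<in> A" and lt: "ax a' < ax a" and le: "ax a \<le> ax a' + w a'" for a a'
  proof (rule ccontr)
    assume "\<not> h a < h a'"
    then have "(ax a, c - h a') \<in> L_shape c (ax a) (h a) (w a) \<inter> L_shape c (ax a') (h a') (w a')"
      using lt le pos[of a'] a' by auto
    moreover have "a \<noteq> a'" using lt by auto
    ultimately show False using rep[of a a'] a a' noAA[OF a a'] by blast
  qed
  define Adj where "Adj b = {ax b - ax a | a. a \<in> A \<and> E a b}" for b
  define Low where "Low b = {ax b - ax a | a. a \<in> A \<and> ax a < ax b}" for b
  define m where "m b = (if Adj b \<noteq> {} then Max (Adj b) else Min (insert 1 (Low b)) / 2)" for b
  have finAdj: "finite (Adj b)" for b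
  proof -
    have "Adj b \<subseteq> (\<lambda>a. ax b - ax a) ` A" unfolding Adj_def by blast
    then show ?thesis using finA finite_subset by blast
  qed
  have finLow: "finite (Low b)" for b
  proof -
    have "Low b \<subseteq> (\<lambda>a. ax b - ax a) ` A" unfolding Low_def by blast
    then show ?thesis using finA finite_subset by blast
  qed
  have Lowpos: "\<And>x. x \<in> Low b \<Longrightarrow> x > 0" for b unfolding Low_def by auto
  have mpos: "m b > 0" if b: "b \<in> B" for b
  proof (cases "Adj b \<noteq> {}")
    case True
    then obtain x where x: "x \<in> Adj b" by blast
    then obtain a where a: "a \<in> A" "E a b" "x = ax b - ax a" unfolding Adj_def by blast
    have "x > 0" using F1[OF a(1) b] a F2[OF a(1) b] by auto
    moreover have "x \<le> Max (Adj b)" using x finAdj by auto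
    ultimately show ?thesis using True unfolding m_def by auto
  next
    case False
    have "Min (insert 1 (Low b)) > 0"
      using finLow[of b] Lowpos[of _ b] by (subst Min_gr_iff) auto
    then show ?thesis using False unfolding m_def by auto
  qed
  have key: "E a b \<longleftrightarrow> ax a \<le> ax b \<and> ax b \<le> ax a + w a \<and> ax b - ax a \<le> m b"
    if a: "a \<in> A" and b: "b \<in> B" for a b
  proof
    assume e: "E a b"
    then have "ax b - ax a \<in> Adj b" using a unfolding Adj_def by blast
    then have "ax b - ax a \<le> m b" "Adj b \<noteq> {}" using finAdj unfolding m_def by auto
    then show "ax a \<le> ax b \<and> ax b \<le> ax a + w a \<and> ax b - ax a \<le> m b"
      using F1[OF a b] e by auto
  next
    assume H: "ax a \<le> ax b \<and> ax b \<le> ax a + w a \<and> ax b - ax a \<le> m b"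
    have lt: "ax a < ax b" using H F2[OF a b] by auto
    show "E a b"
    proof (rule ccontr)
      assume ne: "\<not> E a b"
      then have hlt: "h b < h a" using F1[OF a b] H by auto
      show False
      proof (cases "Adj b \<noteq> {}")
        case True
        have "Max (Adj b) \<in> Adj b" using True finAdj by auto
        then obtain a' where a': "a' \<in> A" "E a' b" "Max (Adj b) = ax b - ax a'" unfolding Adj_def by auto
        have mb: "m b = ax b - ax a'" using True a' unfolding m_def by auto
        have cov': "ax a' \<le> ax b" "ax b \<le> ax a' + w a'" "h a' \<le> h b" using F1[OF a'(1) b] a' by auto
        have "a \<noteq> a'" using ne a' by auto
        then have "ax a \<noteq> ax a'" using F3 a a'(1) by auto
        then have "ax a' < ax a" using H mb by auto
        then have "h a < h a'" using F5[OF a a'(1)] cov' lt by auto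
        then show False using hlt cov' by auto
      next
        case False
        have "ax b - ax a \<in> Low b" using lt a unfolding Low_def by blast
        then have "Min (insert 1 (Low b)) \<le> ax b - ax a" using finLow by auto
        then have "m b < ax b - ax a" using False lt unfolding m_def by auto
        then show False using H by auto
      qed
    qed
  qed
  define S where "S v = (if v \<in> B then vseg (ax v) (0 - ax v) (0 - ax v + m v)
                        else hseg (0 - ax v) (ax v) (ax v + w v))" for v
  have "stick_rep B A E"
    unfolding stick_rep_def
  proof (rule exI[of _ 0], rule exI[of _ S], intro conjI ballI impI)
    fix v assume "v \<in> B"
    then show "\<exists>p l. l > 0 \<and> S v = vseg p (0 - p) (0 - p + l)"
      using mpos unfolding S_def by auto
  next
    fix v assume "v \<in> A"
    then show "\<exists>p l. l > 0 \<and> S v = hseg (0 - p) p (p + l)"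
      using pos disj unfolding S_def by auto
  next
    fix u v assume u: "u \<in> B \<union> A" and v: "v \<in> B \<union> A" and ne: "u \<noteq> v"
    show "E u v \<longleftrightarrow> S u \<inter> S v \<noteq> {}"
    proof (cases "u \<in> B")
      case uB: True
      show ?thesis
      proof (cases "v \<in> B")
        case True
        then show ?thesis using uB noBB F4 ne vseg_disj unfolding S_def by auto
      next
        case False
        then have vA: "v \<in> A" using v by auto
        have "E u v \<longleftrightarrow> E v u" using symE by blast
        also have "\<dots> \<longleftrightarrow> S v \<inter> S u \<noteq> {}"
          using key[OF vA uB] stick_inter[of 0 "ax v" "w v" "ax u" "m u"] vA uB False
          unfolding S_def by auto
        finally show ?thesis by blast
      qed
    next
      case uA: False
      then have uA': "u \<in> A" using u by auto
      show ?thesis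
      proof (cases "v \<in> B")
        case True
        then show ?thesis
          using key[OF uA' True] stick_inter[of 0 "ax u" "w u" "ax v" "m v"] uA True
          unfolding S_def by auto
      next
        case False
        then have "v \<in> A" using v by auto
        then show ?thesis using uA' uA False noAA F3 ne hseg_disj unfolding S_def by auto
      qed
    qed
  qed
  then show ?thesis unfolding stick_graph_def using assms(1) by blast
qed

end
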